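(* There exists a constant $\hat C_0>0$, depending only on $m,\alpha,\beta$, such that the following holds. Let $T>0$, let $(\hat u,\hat v)$ be a smooth solution of the NLDE on $\mathbb{R}\times[0,T]$ with $\mathcal{M}_0=\max_{\mathbb{R}\times[0,T]}(|\hat u|+|\hat v|+1)<\infty$, let $\tau>0$ and let $(u^{(\tau)},v^{(\tau)})$ be a time-splitting solution with mesh $\tau$. Then for all $j\in\mathbb{Z}$, all integers $n\ge0$ with $(n+1)\tau\le T$ and all $s\in[0,\tau)$, $$|\hat u(j\tau+s,n\tau+s)-u^{(\tau)}(j\tau+s,n\tau+s)|^2+|\hat v((j+2)\tau-s,n\tau+s)-v^{(\tau)}((j+2)\tau-s,n\tau+s)|^2$$ $$\le e^{2\tau}\Big(|\hat u(j\tau,n\tau)-u_j^n|^2+|\hat v((j+2)\tau,n\tau)-v_{j+2}^n|^2+\hat C_0\mathcal{M}_0^6\tau\Big).$$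
   Context: Fix constants $m\ge 0$ and $\alpha,\beta\in\mathbb{R}$. The NLDE for $(u,v):\mathbb{R}\times[0,T]\to\mathbb{C}^2$ is $u_t+u_x=imv+i\alpha u|v|^2+2i\beta(\bar u v+u\bar v)v$, $v_t-v_x=imu+i\alpha v|u|^2+2i\beta(\bar u v+u\bar v)u$. Let (N) denote the ODE system on $\mathbb{C}^2$: $\frac{du}{ds}=imv+i\alpha u|v|^2+2i\beta(\bar u v+u\bar v)v$, $\frac{dv}{ds}=imu+i\alpha v|u|^2+2i\beta(\bar u v+u\bar v)u$. Time-splitting scheme with mesh $\tau>0$: given $(u_j^0,v_j^0)_{j\in\mathbb{Z}}\subset\mathbb{C}^2$ with $\sum_j(|u_j^0|^2+|v_j^0|^2)<\infty$, set $(u^{(\tau)},v^{(\tau)})(x,0)=(u_j^0,v_j^0)$ for $x\in[j\tau,(j+1)\tau)$. Inductively, once $(u^{(\tau)},v^{(\tau)})(\cdot,n\tau)$ is defined, set for $t\in[n\tau,(n+1)\tau)$: $u^{(\tau)}(x,t)=u^{(\tau)}(x-(t-n\tau),n\tau)$, $v^{(\tau)}(x,t)=v^{(\tau)}(x+(t-n\tau),n\tau)$; let $(u^{(\tau)},v^{(\tau)})(x,(n+1)\tau-)$ be the left limit in $t$; and for each $x$ define $(u^{(\tau)},v^{(\tau)})(x,(n+1)\tau)$ as the value at $s=\tau$ of the solution of (N) with value $(u^{(\tau)},v^{(\tau)})(x,(n+1)\tau-)$ at $s=0$ (this is globally well defined). Notation: $(u_j^n,v_j^n)=(u^{(\tau)},v^{(\tau)})(j\tau,n\tau)$.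 *)

theory Defs
  imports "HOL-Analysis.Analysis"
begin

definition nlde_F :: "real \<Rightarrow> real \<Rightarrow> real \<Rightarrow> complex \<times> complex \<Rightarrow> complex \<times> complex" where
  "nlde_F m \<alpha> \<beta> z = (case z of (u, v) \<Rightarrow>
     (\<i> * complex_of_real m * v + \<i> * complex_of_real \<alpha> * u * complex_of_real ((cmod v)\<^sup>2)
        + 2 * \<i> * complex_of_real \<beta> * (cnj u * v + u * cnj v) * v,
      \<i> * complex_of_real m * u + \<i> * complex_of_real \<alpha> * v * complex_of_real ((cmod u)\<^sup>2)
        + 2 * \<i> * complex_of_real \<beta> * (cnj u * v + u * cnj v) * u))"

definition N_flow :: "real \<Rightarrow> real \<Rightarrow> real \<Rightarrow> real \<Rightarrow> complex \<times> complex \<Rightarrow> complex \<times> complex" where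
  "N_flow m \<alpha> \<beta> \<tau> z = (THE w. \<exists>y. y 0 = z \<and>
      (\<forall>s\<in>{0..\<tau>}. (y has_vector_derivative nlde_F m \<alpha> \<beta> (y s)) (at s within {0..\<tau>})) \<and>
      y \<tau> = w)"

text \<open>Classical (continuously differentiable) solution of the NLDE on R x [0,T];
  functions are written u x t.\<close>
definition NLDE_solution :: "real \<Rightarrow> real \<Rightarrow> real \<Rightarrow> real \<Rightarrow>
    (real \<Rightarrow> real \<Rightarrow> complex) \<Rightarrow> (real \<Rightarrow> real \<Rightarrow> complex) \<Rightarrow> bool" where
  "NLDE_solution m \<alpha> \<beta> T u v \<longleftrightarrow>
    (\<exists>Du Dv. (\<forall>p\<in>UNIV \<times> {0..T}.
        ((\<lambda>q. u (fst q) (snd q)) has_derivative Du p) (at p within UNIV \<times> {0..T}) \<and>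
        ((\<lambda>q. v (fst q) (snd q)) has_derivative Dv p) (at p within UNIV \<times> {0..T}) \<and>
        Du p (0, 1) + Du p (1, 0) = fst (nlde_F m \<alpha> \<beta> (u (fst p) (snd p), v (fst p) (snd p))) \<and>
        Dv p (0, 1) - Dv p (1, 0) = snd (nlde_F m \<alpha> \<beta> (u (fst p) (snd p), v (fst p) (snd p)))) \<and>
      continuous_on (UNIV \<times> {0..T}) (\<lambda>p. Du p (1, 0)) \<and>
      continuous_on (UNIV \<times> {0..T}) (\<lambda>p. Du p (0, 1)) \<and>
      continuous_on (UNIV \<times> {0..T}) (\<lambda>p. Dv p (1, 0)) \<and>
      continuous_on (UNIV \<times> {0..T}) (\<lambda>p. Dv p (0, 1)))"

definition nlde_M0 :: "real \<Rightarrow> (real \<Rightarrow> real \<Rightarrow> complex) \<Rightarrow> (real \<Rightarrow> real \<Rightarrow> complex) \<Rightarrow> real" where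
  "nlde_M0 T u v = (SUP p\<in>UNIV \<times> {0..T}. cmod (u (fst p) (snd p)) + cmod (v (fst p) (snd p)) + 1)"

definition time_splitting_solution :: "real \<Rightarrow> real \<Rightarrow> real \<Rightarrow> real \<Rightarrow>
    (int \<Rightarrow> complex) \<Rightarrow> (int \<Rightarrow> complex) \<Rightarrow>
    (real \<Rightarrow> real \<Rightarrow> complex) \<Rightarrow> (real \<Rightarrow> real \<Rightarrow> complex) \<Rightarrow> bool" where
  "time_splitting_solution m \<alpha> \<beta> \<tau> u0 v0 ut vt \<longleftrightarrow>
    (\<forall>x. ut x 0 = u0 \<lfloor>x / \<tau>\<rfloor> \<and> vt x 0 = v0 \<lfloor>x / \<tau>\<rfloor>) \<and>
    (\<forall>n::nat. \<forall>x t. real n * \<tau> \<le> t \<and> t < (real n + 1) * \<tau> \<longrightarrow>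
        ut x t = ut (x - (t - real n * \<tau>)) (real n * \<tau>) \<and>
        vt x t = vt (x + (t - real n * \<tau>)) (real n * \<tau>)) \<and>
    (\<forall>n::nat. \<forall>x. (ut x ((real n + 1) * \<tau>), vt x ((real n + 1) * \<tau>)) =
        N_flow m \<alpha> \<beta> \<tau> (Lim (at_left ((real n + 1) * \<tau>)) (\<lambda>t. ut x t),
                          Lim (at_left ((real n + 1) * \<tau>)) (\<lambda>t. vt x t)))"

end

theory Submission
  imports Defs
begin

lemma char_bound:
  fixes G :: "real \<times> real \<Rightarrow> complex" and D :: "real \<times> real \<Rightarrow> real \<times> real \<Rightarrow> complex"
  assumes dG: "\<And>p. p \<in> S \<Longrightarrow> (G has_derivative D p) (at p within S)"
    and inS: "\<And>r. r \<in> {0..s} \<Longrightarrow> (x0 + r * c, t0 + r) \<in> S"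
    and bd: "\<And>r. r \<in> {0..s} \<Longrightarrow> cmod (D (x0 + r * c, t0 + r) (c, 1)) \<le> K"
    and s: "0 \<le> s"
  shows "cmod (G (x0 + s * c, t0 + s) - G (x0, t0)) \<le> K * s"
proof -
  define \<gamma> where "\<gamma> = (\<lambda>r::real. (x0 + r * c, t0 + r))"
  have K: "0 \<le> K" using bd[of 0] s by (auto intro: order_trans[OF norm_ge_zero])
  have dg: "(\<gamma> has_derivative (\<lambda>h. (h * c, h))) (at r within {0..s})" for r
    unfolding \<gamma>_def by (auto intro!: derivative_eq_intros)
  have lin: "bounded_linear (D p)" if "p \<in> S" for p
    using dG[OF that] has_derivative_bounded_linear by blast
  have comp: "((\<lambda>r. G (\<gamma> r)) has_derivative (\<lambda>h. D (\<gamma> r) (h * c, h))) (at r within {0..s})"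
    if "r \<in> {0..s}" for r
  proof -
    have sub: "\<gamma> ` {0..s} \<subseteq> S" using inS unfolding \<gamma>_def by auto
    show ?thesis using has_derivative_in_compose2[of S G D, OF dG sub that dg] by simp
  qed
  have eq: "D (\<gamma> r) (h * c, h) = h *\<^sub>R D (\<gamma> r) (c, 1)" if "r \<in> {0..s}" for r h
  proof -
    have "(h * c, h) = h *\<^sub>R (c, 1)" by simp
    then show ?thesis using linear_scale[OF bounded_linear.linear[OF lin[of "\<gamma> r"]]]
      inS[OF that] unfolding \<gamma>_def by metis
  qed
  have on: "onorm (\<lambda>h. D (\<gamma> r) (h * c, h)) \<le> K" if "r \<in> {0..s}" for r
  proof (rule onorm_bound[OF K])
    fix h :: real
    have "norm (D (\<gamma> r) (h * c, h)) = \<bar>h\<bar> * cmod (D (\<gamma> r) (c, 1))"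
      using eq[OF that] by simp
    also have "\<dots> \<le> K * norm h" using bd[OF that] unfolding \<gamma>_def
      by (metis abs_ge_zero mult.commute mult_left_mono real_norm_def)
    finally show "norm (D (\<gamma> r) (h * c, h)) \<le> K * norm h" .
  qed
  have "norm (G (\<gamma> s) - G (\<gamma> 0)) \<le> K * norm (s - 0)"
    by (rule differentiable_bound[of "{0..s}" "\<lambda>r. G (\<gamma> r)"]) (use comp on s in auto)
  then show ?thesis using s unfolding \<gamma>_def by simp
qed

lemma sq_bound:
  fixes A A0 s \<tau> K :: real
  assumes "0 \<le> A" "A \<le> A0 + s * K" "0 \<le> A0" "0 \<le> s" "s < \<tau>" "0 \<le> K"
  shows "A\<^sup>2 \<le> exp (2 * \<tau>) * (A0\<^sup>2 + \<tau> * K\<^sup>2)"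
proof -
  have e: "1 + 2 * \<tau> \<le> exp (2 * \<tau>)" using exp_ge_add_one_self[of "2*\<tau>"] by simp
  have t: "0 < \<tau>" using assms by simp
  have "A\<^sup>2 \<le> (A0 + s * K)\<^sup>2" using assms by (simp add: power_mono)
  also have "\<dots> \<le> (A0 + \<tau> * K)\<^sup>2" using assms by (intro power_mono) (auto intro: mult_right_mono)
  also have "\<dots> = A0\<^sup>2 + 2 * A0 * \<tau> * K + \<tau>\<^sup>2 * K\<^sup>2" by (simp add: power2_eq_square algebra_simps)
  also have "\<dots> \<le> (1 + 2 * \<tau>) * A0\<^sup>2 + \<tau> * K\<^sup>2 / 2 + \<tau>\<^sup>2 * K\<^sup>2"
  proof -
    have "0 \<le> 2 * \<tau> * (A0 - K / 2)\<^sup>2" using t by simp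
    then show ?thesis by (simp add: power2_eq_square algebra_simps)
  qed
  also have "\<dots> \<le> (1 + 2 * \<tau>) * (A0\<^sup>2 + \<tau> * K\<^sup>2)"
  proof -
    have "0 \<le> K * K * \<tau> * (1 + 2 * \<tau>)" using t assms(6) by simp
    then show ?thesis by (simp add: power2_eq_square algebra_simps)
  qed
  also have "\<dots> \<le> exp (2 * \<tau>) * (A0\<^sup>2 + \<tau> * K\<^sup>2)"
    using e t by (intro mult_right_mono) auto
  finally show ?thesis .
qed

lemma F_bound:
  fixes u v :: complex
  assumes "cmod u + cmod v + 1 \<le> M" "0 \<le> m"
  shows "cmod (fst (nlde_F m \<alpha> \<beta> (u, v))) \<le> (m + \<bar>\<alpha>\<bar> + 4 * \<bar>\<beta>\<bar>) * M ^ 3"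
    and "cmod (snd (nlde_F m \<alpha> \<beta> (u, v))) \<le> (m + \<bar>\<alpha>\<bar> + 4 * \<bar>\<beta>\<bar>) * M ^ 3"
proof -
  have M1: "1 \<le> M" and uM: "cmod u \<le> M" and vM: "cmod v \<le> M" using assms norm_ge_zero[of u] norm_ge_zero[of v] by linarith+
  have M3: "M \<le> M ^ 3" using M1
    by (metis le_cases numeral_le_iff one_le_numeral power_increasing power_one_right semiring_norm(70) order_trans)
  have cuv: "cmod (cnj u * v + u * cnj v) \<le> 2 * M * M"
  proof -
    have "cmod (cnj u * v + u * cnj v) \<le> cmod u * cmod v + cmod u * cmod v"
      using norm_triangle_ineq[of "cnj u * v" "u * cnj v"] by (simp add: norm_mult)
    also have "\<dots> \<le> M * M + M * M" using uM vM M1 by (intro add_mono mult_mono) auto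
    finally show ?thesis by simp
  qed
  have T1: "cmod (\<i> * complex_of_real m * x) \<le> m * M ^ 3" if "cmod x \<le> M" for x
  proof -
    have "cmod (\<i> * complex_of_real m * x) = m * cmod x" using assms(2) by (simp add: norm_mult)
    also have "\<dots> \<le> m * M ^ 3" using that M3 assms(2) by (intro mult_left_mono) auto
    finally show ?thesis .
  qed
  have T2: "cmod (\<i> * complex_of_real \<alpha> * x * complex_of_real ((cmod y)\<^sup>2)) \<le> \<bar>\<alpha>\<bar> * M ^ 3"
    if "cmod x \<le> M" "cmod y \<le> M" for x y
  proof -
    have "cmod (\<i> * complex_of_real \<alpha> * x * complex_of_real ((cmod y)\<^sup>2)) = \<bar>\<alpha>\<bar> * (cmod x * (cmod y)\<^sup>2)"
      by (simp add: norm_mult norm_power)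
    also have "cmod x * (cmod y)\<^sup>2 \<le> M * M\<^sup>2" using that M1 by (intro mult_mono power_mono) auto
    finally show ?thesis by (simp add: mult_left_mono power2_eq_square power3_eq_cube)
  qed
  have T3: "cmod (2 * \<i> * complex_of_real \<beta> * (cnj u * v + u * cnj v) * x) \<le> 4 * \<bar>\<beta>\<bar> * M ^ 3"
    if "cmod x \<le> M" for x
  proof -
    have "cmod (2 * \<i> * complex_of_real \<beta> * (cnj u * v + u * cnj v) * x) = 2 * \<bar>\<beta>\<bar> * (cmod (cnj u * v + u * cnj v) * cmod x)"
      by (simp add: norm_mult)
    also have "cmod (cnj u * v + u * cnj v) * cmod x \<le> (2 * M * M) * M" using that cuv M1 by (intro mult_mono) auto
    finally show ?thesis by (simp add: mult_left_mono power3_eq_cube)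
  qed
  have tri: "cmod (a + b + c) \<le> cmod a + cmod b + cmod c" for a b c :: complex
    by (meson add_mono norm_triangle_ineq order_trans order_refl)
  have dist: "m * M ^ 3 + \<bar>\<alpha>\<bar> * M ^ 3 + 4 * \<bar>\<beta>\<bar> * M ^ 3 = (m + \<bar>\<alpha>\<bar> + 4 * \<bar>\<beta>\<bar>) * M ^ 3"
    by (simp add: algebra_simps)
  have "fst (nlde_F m \<alpha> \<beta> (u, v)) = \<i> * complex_of_real m * v + \<i> * complex_of_real \<alpha> * u * complex_of_real ((cmod v)\<^sup>2)
        + 2 * \<i> * complex_of_real \<beta> * (cnj u * v + u * cnj v) * v" (is "_ = ?E1") by (simp add: nlde_F_def)
  then show "cmod (fst (nlde_F m \<alpha> \<beta> (u, v))) \<le> (m + \<bar>\<alpha>\<bar> + 4 * \<bar>\<beta>\<bar>) * M ^ 3"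
    apply (simp only:)
    using tri[of "\<i> * complex_of_real m * v" "\<i> * complex_of_real \<alpha> * u * complex_of_real ((cmod v)\<^sup>2)"
        "2 * \<i> * complex_of_real \<beta> * (cnj u * v + u * cnj v) * v"] T1[OF vM] T2[OF uM vM] T3[OF vM] dist
    by linarith
  have "snd (nlde_F m \<alpha> \<beta> (u, v)) = \<i> * complex_of_real m * u + \<i> * complex_of_real \<alpha> * v * complex_of_real ((cmod u)\<^sup>2)
        + 2 * \<i> * complex_of_real \<beta> * (cnj u * v + u * cnj v) * u" by (simp add: nlde_F_def)
  then show "cmod (snd (nlde_F m \<alpha> \<beta> (u, v))) \<le> (m + \<bar>\<alpha>\<bar> + 4 * \<bar>\<beta>\<bar>) * M ^ 3"
    apply (simp only:)
    using tri[of "\<i> * complex_of_real m * u" "\<i> * complex_of_real \<alpha> * v * complex_of_real ((cmod u)\<^sup>2)"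
        "2 * \<i> * complex_of_real \<beta> * (cnj u * v + u * cnj v) * u"] T1[OF uM] T2[OF vM uM] T3[OF uM] dist
    by linarith
qed

theorem lemma4p1:
  fixes m \<alpha> \<beta> :: real
  assumes "m \<ge> 0"
  shows "\<exists>C0 > 0. \<forall>T uh vh \<tau> u0 v0 ut vt (j::int) (n::nat) s.
     T > 0 \<longrightarrow> NLDE_solution m \<alpha> \<beta> T uh vh \<longrightarrow>
     bdd_above ((\<lambda>p. cmod (uh (fst p) (snd p)) + cmod (vh (fst p) (snd p)) + 1) ` (UNIV \<times> {0..T})) \<longrightarrow>
     \<tau> > 0 \<longrightarrow>
     (\<lambda>k. (cmod (u0 k))\<^sup>2 + (cmod (v0 k))\<^sup>2) summable_on UNIV \<longrightarrow>
     time_splitting_solution m \<alpha> \<beta> \<tau> u0 v0 ut vt \<longrightarrow>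
     (real n + 1) * \<tau> \<le> T \<longrightarrow> 0 \<le> s \<longrightarrow> s < \<tau> \<longrightarrow>
     (cmod (uh (real_of_int j * \<tau> + s) (real n * \<tau> + s) - ut (real_of_int j * \<tau> + s) (real n * \<tau> + s)))\<^sup>2
     + (cmod (vh ((real_of_int j + 2) * \<tau> - s) (real n * \<tau> + s) - vt ((real_of_int j + 2) * \<tau> - s) (real n * \<tau> + s)))\<^sup>2
     \<le> exp (2 * \<tau>) * ((cmod (uh (real_of_int j * \<tau>) (real n * \<tau>) - ut (real_of_int j * \<tau>) (real n * \<tau>)))\<^sup>2
        + (cmod (vh ((real_of_int j + 2) * \<tau>) (real n * \<tau>) - vt ((real_of_int j + 2) * \<tau>) (real n * \<tau>)))\<^sup>2
        + C0 * (nlde_M0 T uh vh) ^ 6 * \<tau>)"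
proof -
  define L where "L = m + \<bar>\<alpha>\<bar> + 4 * \<bar>\<beta>\<bar>"
  have L0: "0 \<le> L" unfolding L_def using assms by simp
  show ?thesis
  proof (rule exI[of _ "2 * L\<^sup>2 + 1"], intro conjI allI impI)
    show "0 < 2 * L\<^sup>2 + 1" by (simp add: add_nonneg_pos)
    fix T uh vh \<tau> u0 v0 ut vt and j :: int and n :: nat and s
    assume T: "T > 0" and sol: "NLDE_solution m \<alpha> \<beta> T uh vh"
      and bdd: "bdd_above ((\<lambda>p. cmod (uh (fst p) (snd p)) + cmod (vh (fst p) (snd p)) + 1) ` (UNIV \<times> {0..T}))"
      and tau: "\<tau> > 0" and "(\<lambda>k. (cmod (u0 k))\<^sup>2 + (cmod (v0 k))\<^sup>2) summable_on UNIV"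
      and ts: "time_splitting_solution m \<alpha> \<beta> \<tau> u0 v0 ut vt"
      and nT: "(real n + 1) * \<tau> \<le> T" and s0: "0 \<le> s" and st: "s < \<tau>"
    define M where "M = nlde_M0 T uh vh"
    define Dom where "Dom = (UNIV :: real set) \<times> {0..T}"
    have Mb: "cmod (uh (fst p) (snd p)) + cmod (vh (fst p) (snd p)) + 1 \<le> M" if "p \<in> Dom" for p
      unfolding M_def nlde_M0_def using cSUP_upper[OF that[unfolded Dom_def] bdd] .
    have "(0,0) \<in> Dom" unfolding Dom_def using T by simp
    from Mb[OF this] have "cmod (uh 0 0) + cmod (vh 0 0) + 1 \<le> M" by simp
    then have M1: "1 \<le> M"
      using norm_ge_zero[of "uh 0 0"] norm_ge_zero[of "vh 0 0"] by linarith
    define K where "K = L * M ^ 3"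
    have K0: "0 \<le> K" unfolding K_def using L0 M1 by simp
    obtain Du Dv where D: "\<And>p. p \<in> Dom \<Longrightarrow>
        ((\<lambda>q. uh (fst q) (snd q)) has_derivative Du p) (at p within Dom) \<and>
        ((\<lambda>q. vh (fst q) (snd q)) has_derivative Dv p) (at p within Dom) \<and>
        Du p (0, 1) + Du p (1, 0) = fst (nlde_F m \<alpha> \<beta> (uh (fst p) (snd p), vh (fst p) (snd p))) \<and>
        Dv p (0, 1) - Dv p (1, 0) = snd (nlde_F m \<alpha> \<beta> (uh (fst p) (snd p), vh (fst p) (snd p)))"
      using sol unfolding NLDE_solution_def Dom_def by blast
    define x0 where "x0 = real_of_int j * \<tau>"
    define x1 where "x1 = (real_of_int j + 2) * \<tau>"
    define t0 where "t0 = real n * \<tau>"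
    have inD: "(x + r * c, t0 + r) \<in> Dom" if "r \<in> {0..s}" for x c r
    proof -
      have "t0 + r \<le> T" using that st nT unfolding t0_def by (auto simp: algebra_simps)
      moreover have "0 \<le> t0 + r" using that tau unfolding t0_def by auto
      ultimately show ?thesis unfolding Dom_def by auto
    qed
    have bu: "cmod (uh (x0 + s * 1) (t0 + s) - uh x0 t0) \<le> K * s"
    proof -
      have "cmod ((\<lambda>q. uh (fst q) (snd q)) (x0 + s * 1, t0 + s) - (\<lambda>q. uh (fst q) (snd q)) (x0, t0)) \<le> K * s"
      proof (rule char_bound[where D = Du and S = Dom])
        show "\<And>p. p \<in> Dom \<Longrightarrow> ((\<lambda>q. uh (fst q) (snd q)) has_derivative Du p) (at p within Dom)"
          using D by blast
        show "\<And>r. r \<in> {0..s} \<Longrightarrow> (x0 + r * 1, t0 + r) \<in> Dom" by (rule inD)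
        show "0 \<le> s" by (rule s0)
        fix r assume r: "r \<in> {0..s}"
        define p where "p = (x0 + r * 1, t0 + r)"
        have pD: "p \<in> Dom" unfolding p_def using inD[OF r] .
        have lin: "linear (Du p)" using D[OF pD] has_derivative_linear by blast
        have "Du p (1, 1) = Du p (0, 1) + Du p (1, 0)"
          using linear_add[OF lin, of "(0,1)" "(1,0)"] by simp
        also have "\<dots> = fst (nlde_F m \<alpha> \<beta> (uh (fst p) (snd p), vh (fst p) (snd p)))" using D[OF pD] by blast
        finally have "cmod (Du p (1, 1)) \<le> K"
          using F_bound(1)[OF Mb[OF pD] assms] unfolding K_def L_def by simp
        then show "cmod (Du (x0 + r * 1, t0 + r) (1, 1)) \<le> K" unfolding p_def .
      qed
      then show ?thesis by simp
    qed
    have bv: "cmod (vh (x1 + s * -1) (t0 + s) - vh x1 t0) \<le> K * s"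
    proof -
      have "cmod ((\<lambda>q. vh (fst q) (snd q)) (x1 + s * -1, t0 + s) - (\<lambda>q. vh (fst q) (snd q)) (x1, t0)) \<le> K * s"
      proof (rule char_bound[where D = Dv and S = Dom])
        show "\<And>p. p \<in> Dom \<Longrightarrow> ((\<lambda>q. vh (fst q) (snd q)) has_derivative Dv p) (at p within Dom)"
          using D by blast
        show "\<And>r. r \<in> {0..s} \<Longrightarrow> (x1 + r * -1, t0 + r) \<in> Dom" by (rule inD)
        show "0 \<le> s" by (rule s0)
        fix r assume r: "r \<in> {0..s}"
        define p where "p = (x1 + r * -1, t0 + r)"
        have pD: "p \<in> Dom" unfolding p_def using inD[OF r] .
        have lin: "linear (Dv p)" using D[OF pD] has_derivative_linear by blast
        have "Dv p (-1, 1) = Dv p (0, 1) - Dv p (1, 0)"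
          using linear_diff[OF lin, of "(0,1)" "(1,0)"] by simp
        also have "\<dots> = snd (nlde_F m \<alpha> \<beta> (uh (fst p) (snd p), vh (fst p) (snd p)))" using D[OF pD] by blast
        finally have "cmod (Dv p (-1, 1)) \<le> K"
          using F_bound(2)[OF Mb[OF pD] assms] unfolding K_def L_def by simp
        then show "cmod (Dv (x1 + r * -1, t0 + r) (-1, 1)) \<le> K" unfolding p_def .
      qed
      then show ?thesis by simp
    qed
    have trans: "\<forall>x t. real n * \<tau> \<le> t \<and> t < (real n + 1) * \<tau> \<longrightarrow>
        ut x t = ut (x - (t - real n * \<tau>)) (real n * \<tau>) \<and>
        vt x t = vt (x + (t - real n * \<tau>)) (real n * \<tau>)"
      using ts unfolding time_splitting_solution_def by blast
    have tin: "t0 \<le> t0 + s \<and> t0 + s < (real n + 1) * \<tau>" using s0 st unfolding t0_def by (auto simp: algebra_simps)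
    have "ut (x0 + s) (t0 + s) = ut ((x0 + s) - ((t0 + s) - real n * \<tau>)) (real n * \<tau>)"
      using trans tin unfolding t0_def by blast
    then have ue: "ut (x0 + s) (t0 + s) = ut x0 t0" unfolding t0_def by simp
    have "vt (x1 - s) (t0 + s) = vt ((x1 - s) + ((t0 + s) - real n * \<tau>)) (real n * \<tau>)"
      using trans tin unfolding t0_def by blast
    then have ve: "vt (x1 - s) (t0 + s) = vt x1 t0" unfolding t0_def by simp
    define A0 where "A0 = cmod (uh x0 t0 - ut x0 t0)"
    define B0 where "B0 = cmod (vh x1 t0 - vt x1 t0)"
    have A: "cmod (uh (x0 + s) (t0 + s) - ut (x0 + s) (t0 + s)) \<le> A0 + s * K"
    proof -
      have "uh (x0 + s) (t0 + s) - ut (x0 + s) (t0 + s) = (uh (x0 + s * 1) (t0 + s) - uh x0 t0) + (uh x0 t0 - ut x0 t0)"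
        using ue by simp
      then show ?thesis using norm_triangle_ineq[of "uh (x0 + s * 1) (t0 + s) - uh x0 t0" "uh x0 t0 - ut x0 t0"] bu
        unfolding A0_def by (simp add: mult.commute)
    qed
    have B: "cmod (vh (x1 - s) (t0 + s) - vt (x1 - s) (t0 + s)) \<le> B0 + s * K"
    proof -
      have "vh (x1 - s) (t0 + s) - vt (x1 - s) (t0 + s) = (vh (x1 + s * -1) (t0 + s) - vh x1 t0) + (vh x1 t0 - vt x1 t0)"
        using ve by simp
      then show ?thesis using norm_triangle_ineq[of "vh (x1 + s * -1) (t0 + s) - vh x1 t0" "vh x1 t0 - vt x1 t0"] bv
        unfolding B0_def by (simp add: mult.commute)
    qed
    have A2: "(cmod (uh (x0 + s) (t0 + s) - ut (x0 + s) (t0 + s)))\<^sup>2 \<le> exp (2 * \<tau>) * (A0\<^sup>2 + \<tau> * K\<^sup>2)"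
      by (rule sq_bound[OF _ A _ s0 st K0]) (auto simp: A0_def)
    have B2: "(cmod (vh (x1 - s) (t0 + s) - vt (x1 - s) (t0 + s)))\<^sup>2 \<le> exp (2 * \<tau>) * (B0\<^sup>2 + \<tau> * K\<^sup>2)"
      by (rule sq_bound[OF _ B _ s0 st K0]) (auto simp: B0_def)
    have KK: "2 * (\<tau> * K\<^sup>2) \<le> (2 * L\<^sup>2 + 1) * M ^ 6 * \<tau>"
    proof -
      have "2 * (\<tau> * K\<^sup>2) = (2 * L\<^sup>2) * M ^ 6 * \<tau>" 
      proof -
        have "(M ^ 3)\<^sup>2 = M ^ 6" by (simp flip: power_mult)
        then show ?thesis unfolding K_def by (simp add: power_mult_distrib)
      qed
      also have "\<dots> \<le> (2 * L\<^sup>2 + 1) * M ^ 6 * \<tau>" using M1 tau by (intro mult_right_mono) auto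
      finally show ?thesis .
    qed
    have "(cmod (uh (x0 + s) (t0 + s) - ut (x0 + s) (t0 + s)))\<^sup>2 + (cmod (vh (x1 - s) (t0 + s) - vt (x1 - s) (t0 + s)))\<^sup>2
       \<le> exp (2 * \<tau>) * (A0\<^sup>2 + B0\<^sup>2 + (2 * L\<^sup>2 + 1) * M ^ 6 * \<tau>)"
    proof -
      have "exp (2 * \<tau>) * (A0\<^sup>2 + \<tau> * K\<^sup>2) + exp (2 * \<tau>) * (B0\<^sup>2 + \<tau> * K\<^sup>2)
          = exp (2 * \<tau>) * (A0\<^sup>2 + B0\<^sup>2 + 2 * (\<tau> * K\<^sup>2))" by (simp add: algebra_simps)
      also have "\<dots> \<le> exp (2 * \<tau>) * (A0\<^sup>2 + B0\<^sup>2 + (2 * L\<^sup>2 + 1) * M ^ 6 * \<tau>)"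
        using KK by (intro mult_left_mono) auto
      finally show ?thesis using A2 B2 by linarith
    qed
    then show "(cmod (uh (real_of_int j * \<tau> + s) (real n * \<tau> + s) - ut (real_of_int j * \<tau> + s) (real n * \<tau> + s)))\<^sup>2
     + (cmod (vh ((real_of_int j + 2) * \<tau> - s) (real n * \<tau> + s) - vt ((real_of_int j + 2) * \<tau> - s) (real n * \<tau> + s)))\<^sup>2
     \<le> exp (2 * \<tau>) * ((cmod (uh (real_of_int j * \<tau>) (real n * \<tau>) - ut (real_of_int j * \<tau>) (real n * \<tau>)))\<^sup>2
        + (cmod (vh ((real_of_int j + 2) * \<tau>) (real n * \<tau>) - vt ((real_of_int j + 2) * \<tau>) (real n * \<tau>)))\<^sup>2
        + (2 * L\<^sup>2 + 1) * (nlde_M0 T uh vh) ^ 6 * \<tau>)"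
      unfolding x0_def x1_def t0_def A0_def B0_def M_def .
  qed
qed

end
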